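(* Suppose $f$ is convex, Assumptions 1 and 2 hold, $H_k\succeq0$ for all $k$, and there is $\eta\in[0,1)$ such that every $d^k$ satisfies the $\eta$-inexactness condition for $Q_k=Q^{x^k}_{H_k}$. Then for Algorithm 1: (1) For every $k$ with $F(x^k)-F^*\ge (x^k-P_\Omega(x^k))^TH_k(x^k-P_\Omega(x^k))$, $$F(x^{k+1})-F^*\le\left(1-\frac{(1-\eta)\gamma\alpha_k}{2}\right)(F(x^k)-F^* ).$$ (2) Let $k_0$ be the smallest index $k$ with $F(x^k)-F^*<MR_0^2$. Then for all $k\ge k_0$, $$F(x^k)-F^*\le\frac{2MR_0^2}{\gamma(1-\eta)\sum_{t=k_0}^{k-1}\alpha_t+2}.$$ If there exists $\bar\alpha>0$ with $\alpha_k\ge\bar\alpha$ for all $k$, then $$k_0\le\max\left\{0,\ 1+\frac{2}{\gamma(1-\eta)\bar\alpha}\log\frac{F(x^0)-F^*}{MR_0^2}\right\}.$$ For Algorithm 2, if the initial matrices satisfy $m_0I\preceq H_k^0\preceq M_0I$ for all $k$ (with $M_0>0$, $m_0\le M_0$, and $m_0>0$ for Variant 1) and the final $H_k\succeq0$, the same conclusions hold with $\alpha_k\equiv1$, $\bar\alpha=1$, and $M$ replaced by $\tilde M_1(\eta)$ for Variant 1 and by $\tilde M_2(\eta)$ for Variant 2.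
   Context: Problem setting: $F(x)=f(x)+\psi(x)$ on $\mathbb{R}^n$, $F^*=\inf F$, $\Omega=\{x:F(x)=F^*\}$, $P_\Omega$ the Euclidean projection onto $\Omega$, $\|\cdot\|$ the Euclidean / spectral norm. Assumption 1: $f$ is differentiable with $L$-Lipschitz continuous gradient ($L>0$); $\psi:\mathbb{R}^n\to\mathbb{R}\cup\{+\infty\}$ is convex, proper and closed; $F$ is bounded below; $\Omega$ is nonempty. For $x\in\mathbb{R}^n$ and symmetric $H$, $Q^x_H(d)\coloneqq\nabla f(x)^Td+\frac12d^THd+\psi(x+d)-\psi(x)$, $Q^*=\inf_dQ^x_H(d)$; $d$ satisfies the $\eta$-inexactness condition if $Q^x_H(d)\le(1-\eta)Q^*$. Algorithm 1: given $\beta,\gamma\in(0,1)$, $x^0$, fixed $\eta\in[0,1)$; for $k=0,1,\dots$: choose symmetric $H_k$ with $Q_k\coloneqq Q^{x^k}_{H_k}$ strongly convex; compute $d^k$ satisfying the $\eta$-inexactness condition for $Q_k$; let $\Delta_k=\nabla f(x^k)^Td^k+\psi(x^k+d^k)-\psi(x^k)$; let $\alpha_k=\beta^i$ for the smallest nonnegative integer $i$ with $F(x^k+\alpha_kd^k)\le F(x^k)+\alpha_k\gamma\Delta_k$; set $x^{k+1}=x^k+\alpha_kd^k$. Algorithm 2: given $\beta\in(0,1)$, $\gamma\in(0,1]$, $x^0$, fixed $\eta\in[0,1)$; for each $k$: choose symmetric $H^0_k$ (in Variant 1, $H^0_k\succ0$); set $\alpha_k\leftarrow1$, $H_k\leftarrow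 H^0_k$, compute $d^k$ satisfying the $\eta$-inexactness condition for $Q^{x^k}_{H_k}$; while $F(x^k)-F(x^k+d^k)\ge-\gamma Q^{x^k}_{H_k}(d^k)\ge0$ fails: Variant 1 sets $\alpha_k\leftarrow\beta\alpha_k$, $H_k\leftarrow H^0_k/\alpha_k$; Variant 2 sets $H_k\leftarrow H^0_k+\alpha_k^{-1}I$, then $\alpha_k\leftarrow\beta\alpha_k$; then $d^k$ is recomputed satisfying the $\eta$-inexactness condition. Finally $x^{k+1}=x^k+d^k$; "final $H_k$" is the accepted matrix. Assumption 2: there exist finite $R_0,M>0$ with $\sup_{x:F(x)\le F(x^0)}\|x-P_\Omega(x)\|=R_0<\infty$ and $\|H_k\|\le M$ for all $k$. Constants: $\tilde M_2(\eta)\coloneqq M_0+\max\{1,\frac1\beta(\frac{L(1+\sqrt\eta)}{2-\gamma(1-\sqrt\eta)}-m_0)\}$, $\tilde M_1(\eta)\coloneqq M_0\max\{1,\frac{L(1+\sqrt\eta)}{\beta(2-\gamma(1-\sqrt\eta))m_0}\}$. *)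

theory Defs
  imports "HOL-Analysis.Analysis"
begin

text \<open>The extended-valued convex function psi : R^n -> R \<union> {+\<infinity>} is represented by a
  real-valued function psi together with its effective domain D (psi = +\<infinity> outside D).
  Hence F = f + psi on D and F = +\<infinity> outside D.\<close>

definition sym_mat :: "real^'n^'n \<Rightarrow> bool" where
  "sym_mat H \<longleftrightarrow> transpose H = H"

definition psd :: "real^'n^'n \<Rightarrow> bool" where
  "psd H \<longleftrightarrow> (\<forall>v. 0 \<le> v \<bullet> (H *v v))"

definition pd :: "real^'n^'n \<Rightarrow> bool" where
  "pd H \<longleftrightarrow> (\<forall>v. v \<noteq> 0 \<longrightarrow> 0 < v \<bullet> (H *v v))"

definition loewner_between :: "real \<Rightarrow> real^'n^'n \<Rightarrow> real \<Rightarrow> bool" where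
  "loewner_between m H M \<longleftrightarrow>
     (\<forall>v. m * (v \<bullet> v) \<le> v \<bullet> (H *v v) \<and> v \<bullet> (H *v v) \<le> M * (v \<bullet> v))"

definition mnorm :: "real^'n^'n \<Rightarrow> real" where
  "mnorm H = onorm (\<lambda>v. H *v v)"

definition assumption1 ::
  "(real^'n \<Rightarrow> real) \<Rightarrow> (real^'n \<Rightarrow> real^'n) \<Rightarrow> real \<Rightarrow> (real^'n \<Rightarrow> real) \<Rightarrow> (real^'n) set \<Rightarrow> bool" where
  "assumption1 f g L psi D \<longleftrightarrow>
     L > 0 \<and>
     (\<forall>x. (f has_derivative (\<lambda>h. g x \<bullet> h)) (at x)) \<and>
     (\<forall>x y. norm (g x - g y) \<le> L * norm (x - y)) \<and>
     D \<noteq> {} \<and> convex D \<and> convex_on D psi \<and>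
     closed {(x, t). x \<in> D \<and> psi x \<le> t} \<and>
     bdd_below ((\<lambda>x. f x + psi x) ` D)"

definition Fv :: "(real^'n \<Rightarrow> real) \<Rightarrow> (real^'n \<Rightarrow> real) \<Rightarrow> real^'n \<Rightarrow> real" where
  "Fv f psi x = f x + psi x"

definition Fstar :: "(real^'n \<Rightarrow> real) \<Rightarrow> (real^'n \<Rightarrow> real) \<Rightarrow> (real^'n) set \<Rightarrow> real" where
  "Fstar f psi D = Inf (Fv f psi ` D)"

definition Omega :: "(real^'n \<Rightarrow> real) \<Rightarrow> (real^'n \<Rightarrow> real) \<Rightarrow> (real^'n) set \<Rightarrow> (real^'n) set" where
  "Omega f psi D = {x \<in> D. Fv f psi x = Fstar f psi D}"

definition PO :: "(real^'n \<Rightarrow> real) \<Rightarrow> (real^'n \<Rightarrow> real) \<Rightarrow> (real^'n) set \<Rightarrow> real^'n \<Rightarrow> real^'n" where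
  "PO f psi D x = closest_point (Omega f psi D) x"

definition level_radius ::
  "(real^'n \<Rightarrow> real) \<Rightarrow> (real^'n \<Rightarrow> real) \<Rightarrow> (real^'n) set \<Rightarrow> real^'n \<Rightarrow> real \<Rightarrow> bool" where
  "level_radius f psi D x0 R0 \<longleftrightarrow>
     (let S = {norm (x - PO f psi D x) | x. x \<in> D \<and> Fv f psi x \<le> Fv f psi x0}
      in bdd_above S \<and> Sup S = R0)"

definition Qm ::
  "(real^'n \<Rightarrow> real^'n) \<Rightarrow> (real^'n \<Rightarrow> real) \<Rightarrow> (real^'n) set \<Rightarrow> real^'n \<Rightarrow> real^'n^'n \<Rightarrow> real^'n \<Rightarrow> ereal" where
  "Qm g psi D x H d =
     (if x + d \<in> D then ereal (g x \<bullet> d + (1/2) * (d \<bullet> (H *v d)) + psi (x + d) - psi x) else \<infinity>)"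

definition Qstar ::
  "(real^'n \<Rightarrow> real^'n) \<Rightarrow> (real^'n \<Rightarrow> real) \<Rightarrow> (real^'n) set \<Rightarrow> real^'n \<Rightarrow> real^'n^'n \<Rightarrow> ereal" where
  "Qstar g psi D x H = (INF d. Qm g psi D x H d)"

definition inexact ::
  "real \<Rightarrow> (real^'n \<Rightarrow> real^'n) \<Rightarrow> (real^'n \<Rightarrow> real) \<Rightarrow> (real^'n) set \<Rightarrow> real^'n \<Rightarrow> real^'n^'n \<Rightarrow> real^'n \<Rightarrow> bool" where
  "inexact eta g psi D x H d \<longleftrightarrow> Qm g psi D x H d \<le> ereal (1 - eta) * Qstar g psi D x H"

definition Q_strongly_convex ::
  "(real^'n \<Rightarrow> real^'n) \<Rightarrow> (real^'n \<Rightarrow> real) \<Rightarrow> (real^'n) set \<Rightarrow> real^'n \<Rightarrow> real^'n^'n \<Rightarrow> bool" where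
  "Q_strongly_convex g psi D x H \<longleftrightarrow>
     (\<exists>\<mu>>0. \<forall>d1 d2 t. x + d1 \<in> D \<longrightarrow> x + d2 \<in> D \<longrightarrow> 0 \<le> t \<longrightarrow> t \<le> 1 \<longrightarrow>
        Qm g psi D x H (t *\<^sub>R d1 + (1 - t) *\<^sub>R d2)
          \<le> ereal t * Qm g psi D x H d1 + ereal (1 - t) * Qm g psi D x H d2
             - ereal (\<mu> / 2 * t * (1 - t) * (norm (d1 - d2))\<^sup>2))"

definition alg1_run ::
  "(real^'n \<Rightarrow> real) \<Rightarrow> (real^'n \<Rightarrow> real^'n) \<Rightarrow> (real^'n \<Rightarrow> real) \<Rightarrow> (real^'n) set \<Rightarrow>
   real \<Rightarrow> real \<Rightarrow> real \<Rightarrow> (nat \<Rightarrow> real^'n) \<Rightarrow> (nat \<Rightarrow> real^'n^'n) \<Rightarrow> (nat \<Rightarrow> real^'n) \<Rightarrow> (nat \<Rightarrow> real) \<Rightarrow> bool" where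
  "alg1_run f g psi D \<beta> \<gamma> \<eta> x H d \<alpha> \<longleftrightarrow>
     0 < \<beta> \<and> \<beta> < 1 \<and> 0 < \<gamma> \<and> \<gamma> < 1 \<and> 0 \<le> \<eta> \<and> \<eta> < 1 \<and> x 0 \<in> D \<and>
     (\<forall>k. sym_mat (H k) \<and> Q_strongly_convex g psi D (x k) (H k) \<and>
          inexact \<eta> g psi D (x k) (H k) (d k) \<and>
          (let \<Delta> = g (x k) \<bullet> d k + psi (x k + d k) - psi (x k) in
             \<alpha> k = \<beta> ^ (LEAST i. x k + \<beta> ^ i *\<^sub>R d k \<in> D \<and>
                       Fv f psi (x k + \<beta> ^ i *\<^sub>R d k) \<le> Fv f psi (x k) + \<beta> ^ i * \<gamma> * \<Delta>)) \<and>
          x (Suc k) = x k + \<alpha> k *\<^sub>R d k)"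

text \<open>Trial matrices of Algorithm 2 at inner trial j (j = number of failed tests so far).\<close>
definition trial_H :: "nat \<Rightarrow> real \<Rightarrow> real^'n^'n \<Rightarrow> nat \<Rightarrow> real^'n^'n" where
  "trial_H variant \<beta> H0 j =
     (if variant = 1 then (1 / \<beta> ^ j) *\<^sub>R H0
      else (if j = 0 then H0 else H0 + (1 / \<beta> ^ (j - 1)) *\<^sub>R mat 1))"

definition alg2_accept ::
  "(real^'n \<Rightarrow> real) \<Rightarrow> (real^'n \<Rightarrow> real^'n) \<Rightarrow> (real^'n \<Rightarrow> real) \<Rightarrow> (real^'n) set \<Rightarrow>
   real \<Rightarrow> real^'n \<Rightarrow> real^'n^'n \<Rightarrow> real^'n \<Rightarrow> bool" where
  "alg2_accept f g psi D \<gamma> x H d \<longleftrightarrow>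
     - ereal \<gamma> * Qm g psi D x H d \<le> ereal (Fv f psi x - Fv f psi (x + d)) \<and>
     0 \<le> - ereal \<gamma> * Qm g psi D x H d"

text \<open>At outer iteration k the inner
  loop produces trial directions dt k j (j = 0..J k), each eta-inexact for the current trial
  matrix; J k is the first trial that passes the acceptance test.  H k, d k are the accepted
  (final) matrix and direction.\<close>
definition alg2_run ::
  "nat \<Rightarrow> (real^'n \<Rightarrow> real) \<Rightarrow> (real^'n \<Rightarrow> real^'n) \<Rightarrow> (real^'n \<Rightarrow> real) \<Rightarrow> (real^'n) set \<Rightarrow>
   real \<Rightarrow> real \<Rightarrow> real \<Rightarrow> real \<Rightarrow> real \<Rightarrow>
   (nat \<Rightarrow> real^'n) \<Rightarrow> (nat \<Rightarrow> real^'n^'n) \<Rightarrow> (nat \<Rightarrow> nat \<Rightarrow> real^'n) \<Rightarrow> (nat \<Rightarrow> nat) \<Rightarrow>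
   (nat \<Rightarrow> real^'n^'n) \<Rightarrow> (nat \<Rightarrow> real^'n) \<Rightarrow> bool" where
  "alg2_run variant f g psi D \<beta> \<gamma> \<eta> m0 M0 x H0 dt J H d \<longleftrightarrow>
     (variant = 1 \<or> variant = 2) \<and>
     0 < \<beta> \<and> \<beta> < 1 \<and> 0 < \<gamma> \<and> \<gamma> \<le> 1 \<and> 0 \<le> \<eta> \<and> \<eta> < 1 \<and> x 0 \<in> D \<and>
     (\<forall>k. sym_mat (H0 k) \<and> (variant = 1 \<longrightarrow> pd (H0 k)) \<and>
          (\<forall>j \<le> J k. inexact \<eta> g psi D (x k) (trial_H variant \<beta> (H0 k) j) (dt k j)) \<and>
          (\<forall>j < J k. \<not> alg2_accept f g psi D \<gamma> (x k) (trial_H variant \<beta> (H0 k) j) (dt k j)) \<and>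
          alg2_accept f g psi D \<gamma> (x k) (trial_H variant \<beta> (H0 k) (J k)) (dt k (J k)) \<and>
          H k = trial_H variant \<beta> (H0 k) (J k) \<and> d k = dt k (J k) \<and>
          x (Suc k) = x k + d k)"

definition Mt2 :: "real \<Rightarrow> real \<Rightarrow> real \<Rightarrow> real \<Rightarrow> real \<Rightarrow> real \<Rightarrow> real" where
  "Mt2 L \<beta> \<gamma> m0 M0 \<eta> =
     M0 + max 1 ((1 / \<beta>) * (L * (1 + sqrt \<eta>) / (2 - \<gamma> * (1 - sqrt \<eta>)) - m0))"

definition Mt1 :: "real \<Rightarrow> real \<Rightarrow> real \<Rightarrow> real \<Rightarrow> real \<Rightarrow> real \<Rightarrow> real" where
  "Mt1 L \<beta> \<gamma> m0 M0 \<eta> =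
     M0 * max 1 (L * (1 + sqrt \<eta>) / (\<beta> * (2 - \<gamma> * (1 - sqrt \<eta>)) * m0))"

definition is_k0 ::
  "(real^'n \<Rightarrow> real) \<Rightarrow> (real^'n \<Rightarrow> real) \<Rightarrow> (real^'n) set \<Rightarrow> (nat \<Rightarrow> real^'n) \<Rightarrow> real \<Rightarrow> real \<Rightarrow> nat \<Rightarrow> bool" where
  "is_k0 f psi D x M R0 k0 \<longleftrightarrow>
     Fv f psi (x k0) - Fstar f psi D < M * R0\<^sup>2 \<and>
     (\<forall>k < k0. \<not> (Fv f psi (x k) - Fstar f psi D < M * R0\<^sup>2))"

end

theory Submission
  imports Defs
begin


lemma line_deriv:
  fixes f :: "real^'n \<Rightarrow> real"
  assumes d: "\<forall>x. (f has_derivative (\<lambda>h. g x \<bullet> h)) (at x)"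
  shows "((\<lambda>t. f (x + t *\<^sub>R v)) has_real_derivative (g (x + t *\<^sub>R v) \<bullet> v)) (at t)"
proof -
  have l: "((\<lambda>t. x + t *\<^sub>R v) has_derivative (\<lambda>h. h *\<^sub>R v)) (at t)"
    by (auto intro!: derivative_eq_intros)
  have "((\<lambda>t. f (x + t *\<^sub>R v)) has_derivative (\<lambda>h. g (x + t *\<^sub>R v) \<bullet> (h *\<^sub>R v))) (at t)"
    using has_derivative_compose[OF l d[rule_format]] by (simp add: o_def)
  moreover have "(\<lambda>h. g (x + t *\<^sub>R v) \<bullet> (h *\<^sub>R v)) = (*) (g (x + t *\<^sub>R v) \<bullet> v)"
    by (auto simp: fun_eq_iff)
  ultimately show ?thesis unfolding has_field_derivative_def by simp
qed

lemma descent: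
  fixes f :: "real^'n \<Rightarrow> real"
  assumes d: "\<forall>x. (f has_derivative (\<lambda>h. g x \<bullet> h)) (at x)"
    and lip: "\<forall>x y. norm (g x - g y) \<le> L * norm (x - y)"
  shows "f (x + v) \<le> f x + g x \<bullet> v + L / 2 * (norm v)\<^sup>2"
proof -
  define \<phi> where "\<phi> t = f (x + t *\<^sub>R v) - t * (g x \<bullet> v) - L / 2 * t\<^sup>2 * (norm v)\<^sup>2" for t
  have "\<phi> 0 \<ge> \<phi> 1"
  proof (rule DERIV_nonpos_imp_nonincreasing[of 0 1 \<phi>])
    fix t :: real assume t: "0 \<le> t" "t \<le> 1"
    have D: "DERIV \<phi> t :> (g (x + t *\<^sub>R v) \<bullet> v - g x \<bullet> v - L / 2 * (2 * t) * (norm v)\<^sup>2)"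
      unfolding \<phi>_def
      by (auto intro!: derivative_eq_intros line_deriv[OF d])
    have "g (x + t *\<^sub>R v) \<bullet> v - g x \<bullet> v = (g (x + t *\<^sub>R v) - g x) \<bullet> v"
      by (simp add: inner_diff_left)
    also have "\<dots> \<le> norm (g (x + t *\<^sub>R v) - g x) * norm v"
      by (rule norm_cauchy_schwarz)
    also have "\<dots> \<le> L * norm (t *\<^sub>R v) * norm v"
      using lip[rule_format, of "x + t *\<^sub>R v" x] by (simp add: mult_right_mono)
    also have "\<dots> = L * t * (norm v)\<^sup>2" using t by (simp add: power2_eq_square)
    finally have a: "g (x + t *\<^sub>R v) \<bullet> v - g x \<bullet> v \<le> L * t * (norm v)\<^sup>2" .
    have "L / 2 * (2 * t) * (norm v)\<^sup>2 = L * t * (norm v)\<^sup>2" by simp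
    with a have "g (x + t *\<^sub>R v) \<bullet> v - g x \<bullet> v - L / 2 * (2 * t) * (norm v)\<^sup>2 \<le> 0" by linarith
    with D show "\<exists>y. DERIV \<phi> t :> y \<and> y \<le> 0" apply - apply (rule exI) apply (rule conjI) apply assumption apply assumption done
  qed simp
  then show ?thesis unfolding \<phi>_def by simp
qed

lemma tangent:
  fixes f :: "real^'n \<Rightarrow> real"
  assumes d: "\<forall>x. (f has_derivative (\<lambda>h. g x \<bullet> h)) (at x)"
    and fconv: "convex_on UNIV f"
  shows "f x + g x \<bullet> (y - x) \<le> f y"
proof -
  define \<phi> where "\<phi> t = f (x + t *\<^sub>R (y - x))" for t
  have cv: "convex_on UNIV \<phi>"
  proof (rule convex_onI)
    fix t a b :: real assume t: "0 < t" "t < 1"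
    have e: "x + ((1 - t) *\<^sub>R a + t *\<^sub>R b) *\<^sub>R (y - x)
        = (1 - t) *\<^sub>R (x + a *\<^sub>R (y - x)) + t *\<^sub>R (x + b *\<^sub>R (y - x))"
      by (simp add: algebra_simps)
    show "\<phi> ((1 - t) *\<^sub>R a + t *\<^sub>R b) \<le> (1 - t) * \<phi> a + t * \<phi> b"
      unfolding \<phi>_def e using t by (intro convex_onD[OF fconv]) auto
  qed simp
  have D: "(\<phi> has_field_derivative (g x \<bullet> (y - x))) (at 0 within UNIV)"
    unfolding \<phi>_def using line_deriv[OF d, of x "y - x" 0] by simp
  have "\<phi> 1 - \<phi> 0 \<ge> (g x \<bullet> (y - x)) * (1 - 0)"
    by (rule convex_on_imp_above_tangent[OF cv]) (use D in auto)
  then show ?thesis unfolding \<phi>_def by simp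
qed

lemma Fstar_le:
  assumes A1: "assumption1 f g L psi D" and x: "x \<in> D"
  shows "Fstar f psi D \<le> Fv f psi x"
proof -
  have "bdd_below (Fv f psi ` D)" using A1 unfolding assumption1_def Fv_def by simp
  then show ?thesis unfolding Fstar_def using x by (intro cInf_lower) auto
qed

lemma Omega_closed:
  assumes A1: "assumption1 f g L psi D"
  shows "closed (Omega f psi D)"
proof (unfold closed_sequential_limits, intro allI impI, elim conjE)
  fix xs l assume xs: "\<forall>n. xs n \<in> Omega f psi D" and lim: "xs \<longlonglongrightarrow> l"
  have d: "\<forall>x. (f has_derivative (\<lambda>h. g x \<bullet> h)) (at x)"
    and cl: "closed {(x, t). x \<in> D \<and> psi x \<le> t}" using A1 unfolding assumption1_def by auto
  have "isCont f l" using d has_derivative_continuous by blast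
  then have fl: "(\<lambda>n. f (xs n)) \<longlonglongrightarrow> f l" using lim isCont_tendsto_compose by blast
  define S where "S = Fstar f psi D"
  have lim2: "(\<lambda>n. (xs n, S - f (xs n))) \<longlonglongrightarrow> (l, S - f l)"
    by (intro tendsto_Pair lim tendsto_diff tendsto_const fl)
  have "\<forall>n. (xs n, S - f (xs n)) \<in> {(x, t). x \<in> D \<and> psi x \<le> t}"
    using xs unfolding Omega_def Fv_def S_def by (auto simp: algebra_simps)
  then have "(l, S - f l) \<in> {(x, t). x \<in> D \<and> psi x \<le> t}"
    using closed_sequentially[OF cl _ lim2] by blast
  then have lD: "l \<in> D" and le: "Fv f psi l \<le> S" unfolding Fv_def by auto
  moreover have "S \<le> Fv f psi l" unfolding S_def using Fstar_le[OF A1 lD] .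
  ultimately show "l \<in> Omega f psi D" unfolding Omega_def S_def by auto
qed

lemma PO_in:
  assumes A1: "assumption1 f g L psi D" and ne: "Omega f psi D \<noteq> {}"
  shows "PO f psi D x \<in> D" "Fv f psi (PO f psi D x) = Fstar f psi D"
  using closest_point_in_set[OF Omega_closed[OF A1] ne, of x]
  unfolding PO_def Omega_def by auto

lemma quad_scale: "(c *\<^sub>R v) \<bullet> (H *v (c *\<^sub>R v)) = c\<^sup>2 * (v \<bullet> (H *v (v::real^'n)))"
proof -
  have "H *v (c *\<^sub>R v) = c *\<^sub>R (H *v v)"
    by (simp add: vec_eq_iff matrix_vector_mult_def sum_distrib_left vector_scaleR_component algebra_simps)
  then show ?thesis by (simp add: power2_eq_square)
qed

lemma quad_neg: "(- v) \<bullet> (H *v (- v)) = (v \<bullet> (H *v (v::real^'n)))"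
  by (simp add: linear_neg[OF matrix_vector_mul_linear])

lemma Qm_bound:
  assumes A1: "assumption1 f g L psi D" and fconv: "convex_on UNIV f"
    and x: "x \<in> D" and P: "P \<in> D" and l0: "0 \<le> l" and l1: "l \<le> 1"
  shows "Qm g psi D x H (l *\<^sub>R (P - x))
          \<le> ereal (l * (Fv f psi P - Fv f psi x) + l\<^sup>2 / 2 * ((P - x) \<bullet> (H *v (P - x))))"
proof -
  have d: "\<forall>x. (f has_derivative (\<lambda>h. g x \<bullet> h)) (at x)"
    and cD: "convex D" and cpsi: "convex_on D psi" using A1 unfolding assumption1_def by auto
  have e: "x + l *\<^sub>R (P - x) = (1 - l) *\<^sub>R x + l *\<^sub>R P" by (simp add: algebra_simps)
  have mem: "x + l *\<^sub>R (P - x) \<in> D" unfolding e using cD x P l0 l1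
    by (intro convexD) auto
  have ps: "psi (x + l *\<^sub>R (P - x)) \<le> (1 - l) * psi x + l * psi P"
    unfolding e using convex_onD[OF cpsi, of l x P] x P l0 l1 by auto
  have tg: "f x + g x \<bullet> (P - x) \<le> f P" by (rule tangent[OF d fconv])
  have "g x \<bullet> (l *\<^sub>R (P - x)) = l * (g x \<bullet> (P - x))" by simp
  also have "\<dots> \<le> l * (f P - f x)" using tg l0 by (intro mult_left_mono) auto
  finally have gl: "g x \<bullet> (l *\<^sub>R (P - x)) \<le> l * (f P - f x)" .
  show ?thesis unfolding Qm_def using mem gl ps quad_scale[of l "P - x" H]
    by (simp add: Fv_def algebra_simps)
qed

lemma inexact_facts:
  assumes inx: "inexact \<eta> g psi D x H d" and e0: "0 \<le> \<eta>" and e1: "\<eta> < 1" and x: "x \<in> D"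
  shows "\<exists>s q. Qstar g psi D x H = ereal s \<and> Qm g psi D x H d = ereal q \<and> q \<le> (1 - \<eta>) * s
          \<and> x + d \<in> D \<and> s \<le> 0 \<and> (\<forall>e r. Qm g psi D x H e \<le> ereal r \<longrightarrow> s \<le> r)"
proof -
  have Q0: "Qm g psi D x H 0 = ereal 0" unfolding Qm_def using x by simp
  have le0: "Qstar g psi D x H \<le> ereal 0" unfolding Qstar_def using Q0
    by (metis INF_lower UNIV_I)
  have inx': "Qm g psi D x H d \<le> ereal (1 - \<eta>) * Qstar g psi D x H"
    using inx unfolding inexact_def .
  have qform: "Qm g psi D x H d = \<infinity> \<or> (\<exists>q. Qm g psi D x H d = ereal q)"
    unfolding Qm_def by auto
  show ?thesis
  proof (cases "Qstar g psi D x H")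
    case (real s)
    have "Qm g psi D x H d \<le> ereal ((1 - \<eta>) * s)" using inx' real by simp
    with qform obtain q where q: "Qm g psi D x H d = ereal q" by auto
    have qs: "q \<le> (1 - \<eta>) * s" using inx' real q by simp
    have dD: "x + d \<in> D" using q unfolding Qm_def by (auto split: if_splits)
    have s0: "s \<le> 0" using le0 real by simp
    have "\<forall>e r. Qm g psi D x H e \<le> ereal r \<longrightarrow> s \<le> r"
    proof (intro allI impI)
      fix e r assume "Qm g psi D x H e \<le> ereal r"
      moreover have "Qstar g psi D x H \<le> Qm g psi D x H e" unfolding Qstar_def
        by (metis INF_lower UNIV_I)
      ultimately have "ereal s \<le> ereal r" using real by (metis order_trans)
      then show "s \<le> r" by simp
    qed
    then show ?thesis using real q qs dD s0 by blast
  next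
    case PInf then show ?thesis using le0 by simp
  next
    case MInf
    then have "Qm g psi D x H d \<le> - \<infinity>" using inx' e1 by simp
    then show ?thesis using qform by auto
  qed
qed

lemma aux3: "(a::real) \<noteq> 0 \<Longrightarrow> b * a * (1 / a * (r / a)) = r * b / a"
  by (simp add: field_simps power2_eq_square)

lemma eta0_bound:
  fixes \<mu> n2 p :: real
  assumes S: "\<And>t. 0 \<le> t \<Longrightarrow> t \<le> 1 \<Longrightarrow> - p \<le> - t * p - \<mu> / 2 * t * (1 - t) * n2"
    and mu: "0 < \<mu>" and n2: "0 \<le> n2" and p: "0 \<le> p"
  shows "\<mu> * n2 \<le> 2 * p"
proof (rule ccontr)
  assume "\<not> \<mu> * n2 \<le> 2 * p"
  then have big: "2 * p < \<mu> * n2" by simp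
  then have mn: "0 < \<mu> * n2" using p by linarith
  define t where "t = (2 * p / (\<mu> * n2) + 1) / 2"
  have r: "2 * p / (\<mu> * n2) < 1" using big mn by (simp add: field_simps)
  have r0: "0 \<le> 2 * p / (\<mu> * n2)" using mn p by simp
  have t0: "0 \<le> t" and t1: "t < 1" unfolding t_def using r r0 by auto
  have tgt: "2 * p / (\<mu> * n2) < t" unfolding t_def using r by simp
  then have "2 * p < t * (\<mu> * n2)" using mn by (simp add: field_simps)
  then have a: "p < \<mu> / 2 * t * n2" by (simp add: algebra_simps)
  have "(1 - t) * p \<ge> (1 - t) * (\<mu> / 2 * t * n2)" using S[OF t0 less_imp_le[OF t1]]
    by (simp add: algebra_simps)
  then have "p \<ge> \<mu> / 2 * t * n2" using t1 by simp
  then show False using a by simp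
qed

lemma etapos_bound:
  fixes \<mu> n2 p r s :: real
  assumes S: "\<And>t. 0 \<le> t \<Longrightarrow> t \<le> 1 \<Longrightarrow> s \<le> - t * p - \<mu> / 2 * t * (1 - t) * n2"
    and qs: "- p \<le> (1 - r\<^sup>2) * s" and r0: "0 < r" and r1: "r < 1"
  shows "\<mu> * n2 * (1 - r) \<le> 2 * p * (1 + r)"
proof -
  define t where "t = 1 / (1 + r)"
  have t0: "0 \<le> t" and t1: "t \<le> 1" unfolding t_def using r0 by auto
  have "0 \<le> 1 - r\<^sup>2" using r0 r1 by (simp add: power_le_one)
  then have "- p \<le> (1 - r\<^sup>2) * (- t * p - \<mu> / 2 * t * (1 - t) * n2)"
    using qs S[OF t0 t1] by (meson mult_left_mono order_trans)
  also have "\<dots> = - ((1 - r\<^sup>2) * t) * p - \<mu> / 2 * ((1 - r\<^sup>2) * (t * (1 - t))) * n2"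
    by (simp add: field_simps)
  also have "(1 - r\<^sup>2) * t = 1 - r" unfolding t_def using r0
    by (simp add: field_simps power2_eq_square)
  also have "(1 - r\<^sup>2) * (t * (1 - t)) = r * (1 - r) / (1 + r)"
  proof -
    have rp: "1 + r \<noteq> 0" using r0 by simp
    have "1 - t = r / (1 + r)" unfolding t_def using rp by (simp add: field_simps)
    moreover have "1 - r\<^sup>2 = (1 - r) * (1 + r)" by (simp add: algebra_simps power2_eq_square)
    ultimately have "(1 - r\<^sup>2) * (t * (1 - t)) = (1 - r) * (1 + r) * (1 / (1 + r) * (r / (1 + r)))"
      unfolding t_def by simp
    also have "\<dots> = r * (1 - r) / (1 + r)" by (rule aux3[OF rp])
    finally show ?thesis .
  qed
  finally have X: "\<mu> / 2 * (r * (1 - r) / (1 + r)) * n2 \<le> r * p" by (simp add: algebra_simps)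
  have "\<mu> / 2 * (r * (1 - r) / (1 + r)) * n2 * (2 * (1 + r)) \<le> r * p * (2 * (1 + r))"
    using X r0 by (intro mult_right_mono) auto
  moreover have "\<mu> / 2 * (r * (1 - r) / (1 + r)) * n2 * (2 * (1 + r)) = r * (\<mu> * n2 * (1 - r))"
    using r0 by (simp add: field_simps)
  ultimately have "r * (\<mu> * n2 * (1 - r)) \<le> r * (2 * p * (1 + r))" by (simp add: algebra_simps)
  then show ?thesis using r0 by simp
qed

lemma accept_lemma:
  assumes A1: "assumption1 f g L psi D" and x: "x \<in> D" and e0: "0 \<le> \<eta>" and e1: "\<eta> < 1"
    and g0: "0 < \<gamma>" and g1: "\<gamma> \<le> 1"
    and Hlow: "\<forall>v. \<mu> * (v \<bullet> v) \<le> v \<bullet> (H *v v)"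
    and mu: "L * (1 + sqrt \<eta>) / (2 - \<gamma> * (1 - sqrt \<eta>)) \<le> \<mu>"
    and inx: "inexact \<eta> g psi D x H d"
  shows "alg2_accept f g psi D \<gamma> x H d"
proof -
  have L0: "0 < L" and d: "\<forall>x. (f has_derivative (\<lambda>h. g x \<bullet> h)) (at x)"
    and lip: "\<forall>x y. norm (g x - g y) \<le> L * norm (x - y)"
    and cD: "convex D" and cpsi: "convex_on D psi" using A1 unfolding assumption1_def by auto
  obtain s q where Qd: "Qm g psi D x H d = ereal q" and qs: "q \<le> (1 - \<eta>) * s"
    and dD: "x + d \<in> D" and s0: "s \<le> 0" and low: "\<forall>e r. Qm g psi D x H e \<le> ereal r \<longrightarrow> s \<le> r"
    using inexact_facts[OF inx e0 e1 x] by blast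
  define r where "r = sqrt \<eta>"
  have r0: "0 \<le> r" and r1: "r < 1" and r2: "r\<^sup>2 = \<eta>" unfolding r_def using e0 e1 by auto
  define n2 where "n2 = d \<bullet> d"
  define hd where "hd = d \<bullet> (H *v d)"
  have n20: "0 \<le> n2" unfolding n2_def by simp
  have qdef: "q = g x \<bullet> d + 1 / 2 * hd + psi (x + d) - psi x"
    using Qd dD unfolding Qm_def hd_def by simp
  have "\<gamma> * (1 - r) \<le> 1 * 1" using g0 g1 r0 r1 by (intro mult_mono) auto
  then have den: "0 < 2 - \<gamma> * (1 - r)" by simp
  have "0 < L * (1 + r) / (2 - \<gamma> * (1 - r))" using L0 r0 den by (intro divide_pos_pos) auto
  then have mu0: "0 < \<mu>" using mu unfolding r_def[symmetric] by linarith
  have hdge: "\<mu> * n2 \<le> hd" unfolding n2_def hd_def using Hlow by blast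
  have S: "s \<le> t * q - \<mu> / 2 * t * (1 - t) * n2" if t0: "0 \<le> t" and t1: "t \<le> 1" for t
  proof -
    have e: "x + t *\<^sub>R d = (1 - t) *\<^sub>R x + t *\<^sub>R (x + d)" by (simp add: algebra_simps)
    have mem: "x + t *\<^sub>R d \<in> D" unfolding e using cD x dD t0 t1 by (intro convexD) auto
    have ps: "psi (x + t *\<^sub>R d) \<le> (1 - t) * psi x + t * psi (x + d)"
      unfolding e using convex_onD[OF cpsi, of t x "x + d"] x dD t0 t1 by auto
    have K: "0 \<le> t * (1 - t) * (hd - \<mu> * n2)" using t0 t1 hdge by simp
    have E: "t * q - \<mu> / 2 * t * (1 - t) * n2
        - (t * (g x \<bullet> d) + 1 / 2 * (t\<^sup>2 * hd) + psi (x + t *\<^sub>R d) - psi x)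
        = ((1 - t) * psi x + t * psi (x + d) - psi (x + t *\<^sub>R d)) + t * (1 - t) * (hd - \<mu> * n2) / 2"
      unfolding qdef by (simp add: field_simps power2_eq_square)
    have R: "t * (g x \<bullet> d) + 1 / 2 * (t\<^sup>2 * hd) + psi (x + t *\<^sub>R d) - psi x
        \<le> t * q - \<mu> / 2 * t * (1 - t) * n2"
      using E ps K by linarith
    have "Qm g psi D x H (t *\<^sub>R d)
        = ereal (t * (g x \<bullet> d) + 1 / 2 * (t\<^sup>2 * hd) + psi (x + t *\<^sub>R d) - psi x)"
      unfolding Qm_def hd_def using mem quad_scale[of t d H] by simp
    also have "\<dots> \<le> ereal (t * q - \<mu> / 2 * t * (1 - t) * n2)"
      using R by simp
    finally show ?thesis using low by blast
  qed
  define p where "p = - q"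
  have pq: "- p \<le> (1 - r\<^sup>2) * s" unfolding p_def r2 using qs by simp
  have "(1 - \<eta>) * s \<le> 0" using s0 e1 by (intro mult_nonneg_nonpos) auto
  then have p0: "0 \<le> p" unfolding p_def using qs by linarith
  have B: "\<mu> * n2 * (1 - r) \<le> 2 * p * (1 + r)"
  proof (cases "r = 0")
    case True
    have S': "- p \<le> - t * p - \<mu> / 2 * t * (1 - t) * n2" if "0 \<le> t" "t \<le> 1" for t
      using S[OF that] pq True unfolding p_def by simp
    show ?thesis using eta0_bound[OF S' mu0 n20 p0] True by simp
  next
    case False
    then have "0 < r" using r0 by simp
    moreover have "s \<le> - t * p - \<mu> / 2 * t * (1 - t) * n2" if "0 \<le> t" "t \<le> 1" for t
      using S[OF that] unfolding p_def by simp
    ultimately show ?thesis using etapos_bound[OF _ pq _ r1] by blast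
  qed
  have key: "L * n2 - hd \<le> 2 * (1 - \<gamma>) * p"
  proof (cases "L \<le> \<mu>")
    case True
    have "L * n2 \<le> \<mu> * n2" using True n20 by (intro mult_right_mono) auto
    moreover have "0 \<le> 2 * (1 - \<gamma>) * p" using g1 p0 by simp
    ultimately show ?thesis using hdge by linarith
  next
    case False
    have "L * (1 + r) \<le> \<mu> * (2 - \<gamma> * (1 - r))" using mu den unfolding r_def[symmetric]
      by (simp add: divide_le_eq)
    then have m: "(L - \<mu>) * (1 + r) \<le> \<mu> * (1 - \<gamma>) * (1 - r)" by (simp add: algebra_simps)
    have "(L - \<mu>) * (\<mu> * n2 * (1 - r)) \<le> (L - \<mu>) * (2 * p * (1 + r))"
      using B False by (intro mult_left_mono) auto
    also have "\<dots> = 2 * p * ((L - \<mu>) * (1 + r))" by (simp add: algebra_simps)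
    also have "\<dots> \<le> 2 * p * (\<mu> * (1 - \<gamma>) * (1 - r))" using m p0 by (intro mult_left_mono) auto
    finally have "(\<mu> * (1 - r)) * ((L - \<mu>) * n2) \<le> (\<mu> * (1 - r)) * (2 * (1 - \<gamma>) * p)"
      by (simp add: algebra_simps)
    moreover have "0 < \<mu> * (1 - r)" using mu0 r1 by simp
    ultimately have "(L - \<mu>) * n2 \<le> 2 * (1 - \<gamma>) * p" using mult_le_cancel_left_pos by blast
    then show ?thesis using hdge by (simp add: algebra_simps)
  qed
  have desc: "f (x + d) \<le> f x + g x \<bullet> d + L / 2 * n2"
    using descent[OF d lip, of x d] unfolding n2_def by (simp add: power2_norm_eq_inner)
  have key': "L * n2 - hd \<le> 2 * (\<gamma> * q) - 2 * q" using key unfolding p_def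
    by (simp add: algebra_simps)
  have "Fv f psi (x + d) \<le> Fv f psi x + \<gamma> * q"
    using desc key' qdef unfolding Fv_def by linarith
  moreover have "\<gamma> * q \<le> 0" using p0 g0 unfolding p_def by (simp add: mult_nonneg_nonpos)
  ultimately show ?thesis unfolding alg2_accept_def Qd by simp
qed

lemma smat: "((c::real) *\<^sub>R A) *v v = c *\<^sub>R (A *v (v::real^'n))"
  by (simp add: vec_eq_iff matrix_vector_mult_def sum_distrib_left vector_scaleR_component algebra_simps)

lemma alg1_step:
  assumes A1: "assumption1 f g L psi D"
    and run: "alg1_run f g psi D \<beta> \<gamma> \<eta> x H d \<alpha>" and psdH: "psd (H k)" and xk: "x k \<in> D"
  shows "x (Suc k) \<in> D \<and> 0 < \<alpha> k \<and> (\<exists>\<Delta>. Fv f psi (x (Suc k)) \<le> Fv f psi (x k) + \<gamma> * \<alpha> k * \<Delta>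
           \<and> (\<forall>e r. Qm g psi D (x k) (H k) e \<le> ereal r \<longrightarrow> \<Delta> \<le> (1 - \<eta>) * r))"
proof -
  have L0: "0 < L" and fd: "\<forall>x. (f has_derivative (\<lambda>h. g x \<bullet> h)) (at x)"
    and lip: "\<forall>x y. norm (g x - g y) \<le> L * norm (x - y)"
    and cD: "convex D" and cpsi: "convex_on D psi" using A1 unfolding assumption1_def by auto
  have b0: "0 < \<beta>" and b1: "\<beta> < 1" and g0: "0 < \<gamma>" and g1: "\<gamma> < 1" and e0: "0 \<le> \<eta>" and e1: "\<eta> < 1"
    using run unfolding alg1_run_def by auto
  have sc: "Q_strongly_convex g psi D (x k) (H k)" and inx: "inexact \<eta> g psi D (x k) (H k) (d k)"
    and xs: "x (Suc k) = x k + \<alpha> k *\<^sub>R d k"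
    using run unfolding alg1_run_def by auto
  define \<Delta> where "\<Delta> = g (x k) \<bullet> d k + psi (x k + d k) - psi (x k)"
  define Pr where "Pr i \<longleftrightarrow> x k + \<beta> ^ i *\<^sub>R d k \<in> D \<and>
      Fv f psi (x k + \<beta> ^ i *\<^sub>R d k) \<le> Fv f psi (x k) + \<beta> ^ i * \<gamma> * \<Delta>" for i
  have al: "\<alpha> k = \<beta> ^ (LEAST i. Pr i)"
    using run unfolding alg1_run_def Pr_def \<Delta>_def Let_def by auto
  obtain s q where Qs: "Qstar g psi D (x k) (H k) = ereal s" and Qd: "Qm g psi D (x k) (H k) (d k) = ereal q"
    and qs: "q \<le> (1 - \<eta>) * s"
    and dD: "x k + d k \<in> D" and s0: "s \<le> 0"
    and low: "\<forall>e r. Qm g psi D (x k) (H k) e \<le> ereal r \<longrightarrow> s \<le> r"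
    using inexact_facts[OF inx e0 e1 xk] by blast
  have hd0: "0 \<le> d k \<bullet> (H k *v d k)" using psdH unfolding psd_def by blast
  have qdef: "q = \<Delta> + 1 / 2 * (d k \<bullet> (H k *v d k))"
    using Qd dD unfolding Qm_def \<Delta>_def by simp
  have Dq: "\<Delta> \<le> q" using qdef hd0 by simp
  have es: "(1 - \<eta>) * s \<le> 0" using s0 e1 by (intro mult_nonneg_nonpos) auto
  have ex: "\<exists>i. Pr i"
  proof (cases "\<Delta> < 0")
    case True
    have dn: "d k \<noteq> 0" using True unfolding \<Delta>_def by auto
    define n2 where "n2 = (norm (d k))\<^sup>2"
    have n2p: "0 < n2" unfolding n2_def using dn by simp
    have "0 < 2 * (1 - \<gamma>) * (- \<Delta>)" using True g1 by (intro mult_pos_pos) auto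
    then have "0 < 2 * (1 - \<gamma>) * (- \<Delta>) / (L * n2)" using L0 n2p by (intro divide_pos_pos) auto
    then obtain i where bi: "\<beta> ^ i < 2 * (1 - \<gamma>) * (- \<Delta>) / (L * n2)"
      using real_arch_pow_inv[OF _ b1] by blast
    define a where "a = \<beta> ^ i"
    have a0: "0 < a" and a1: "a \<le> 1" unfolding a_def using b0 b1 by (auto simp: power_le_one)
    have e: "x k + a *\<^sub>R d k = (1 - a) *\<^sub>R x k + a *\<^sub>R (x k + d k)" by (simp add: algebra_simps)
    have mem: "x k + a *\<^sub>R d k \<in> D" unfolding e using cD xk dD a0 a1 by (intro convexD) auto
    have ps: "psi (x k + a *\<^sub>R d k) \<le> (1 - a) * psi (x k) + a * psi (x k + d k)"
      unfolding e using convex_onD[OF cpsi, of a "x k" "x k + d k"] xk dD a0 a1 by auto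
    have de: "f (x k + a *\<^sub>R d k) \<le> f (x k) + a * (g (x k) \<bullet> d k) + L / 2 * (a\<^sup>2 * n2)"
      using descent[OF fd lip, of "x k" "a *\<^sub>R d k"] unfolding n2_def
      by (simp add: power_mult_distrib)
    have "a * (L * n2) < 2 * (1 - \<gamma>) * (- \<Delta>)" using bi n2p L0 unfolding a_def
      by (simp add: field_simps)
    then have "a * (a * (L * n2)) \<le> a * (2 * (1 - \<gamma>) * (- \<Delta>))" using a0
      by (intro mult_left_mono) auto
    then have q2: "L / 2 * (a\<^sup>2 * n2) \<le> a * (1 - \<gamma>) * (- \<Delta>)"
      by (simp add: power2_eq_square algebra_simps)
    have "Fv f psi (x k + a *\<^sub>R d k) \<le> Fv f psi (x k) + a * \<gamma> * \<Delta>"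
      using de ps q2 unfolding Fv_def \<Delta>_def by (simp add: algebra_simps)
    then have "Pr i" unfolding Pr_def a_def[symmetric] using mem by simp
    then show ?thesis by blast
  next
    case False
    then have D0: "\<Delta> = 0" and q0: "q = 0" using Dq qs es by auto
    have "(1 - \<eta>) * s = 0" using qs q0 es by linarith
    then have sz: "s = 0" using e1 by simp
    obtain \<mu> where mu: "0 < \<mu>" and scd: "\<forall>d1 d2 t. x k + d1 \<in> D \<longrightarrow> x k + d2 \<in> D \<longrightarrow> 0 \<le> t \<longrightarrow> t \<le> 1 \<longrightarrow>
        Qm g psi D (x k) (H k) (t *\<^sub>R d1 + (1 - t) *\<^sub>R d2)
          \<le> ereal t * Qm g psi D (x k) (H k) d1 + ereal (1 - t) * Qm g psi D (x k) (H k) d2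
             - ereal (\<mu> / 2 * t * (1 - t) * (norm (d1 - d2))\<^sup>2)"
      using sc unfolding Q_strongly_convex_def by blast
    have Q0: "Qm g psi D (x k) (H k) 0 = ereal 0" unfolding Qm_def using xk by simp
    have "Qm g psi D (x k) (H k) ((1/2) *\<^sub>R d k + (1 - 1/2) *\<^sub>R 0)
          \<le> ereal (1/2) * Qm g psi D (x k) (H k) (d k) + ereal (1 - 1/2) * Qm g psi D (x k) (H k) 0
             - ereal (\<mu> / 2 * (1/2) * (1 - 1/2) * (norm (d k - 0))\<^sup>2)"
      using scd[rule_format, of "d k" 0 "1/2"] dD xk by simp
    then have "Qm g psi D (x k) (H k) ((1/2) *\<^sub>R d k) \<le> ereal (- (\<mu> / 8 * (norm (d k))\<^sup>2))"
      using Qd q0 Q0 by simp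
    then have "s \<le> - (\<mu> / 8 * (norm (d k))\<^sup>2)" using low by blast
    then have "\<mu> / 8 * (norm (d k))\<^sup>2 \<le> 0" using sz by simp
    then have "(norm (d k))\<^sup>2 \<le> 0" using mu by (simp add: mult_le_0_iff)
    then have "d k = 0" by simp
    then have "Pr 0" unfolding Pr_def using xk D0 by simp
    then show ?thesis by blast
  qed
  define m where "m = (LEAST i. Pr i)"
  have P: "Pr m" unfolding m_def using LeastI_ex[OF ex] .
  have al': "\<alpha> k = \<beta> ^ m" using al unfolding m_def .
  have xS: "x (Suc k) \<in> D" and arm: "Fv f psi (x (Suc k)) \<le> Fv f psi (x k) + \<alpha> k * \<gamma> * \<Delta>"
    using P unfolding Pr_def al' xs by auto
  have apos: "0 < \<alpha> k" unfolding al using b0 by simp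
  have "\<forall>e r. Qm g psi D (x k) (H k) e \<le> ereal r \<longrightarrow> \<Delta> \<le> (1 - \<eta>) * r"
  proof (intro allI impI)
    fix e r assume "Qm g psi D (x k) (H k) e \<le> ereal r"
    then have "s \<le> r" using low by blast
    then have "(1 - \<eta>) * s \<le> (1 - \<eta>) * r" using e1 by (intro mult_left_mono) auto
    then show "\<Delta> \<le> (1 - \<eta>) * r" using Dq qs by linarith
  qed
  then show ?thesis using xS apos arm by (auto simp: algebra_simps)
qed



lemma rec_step:
  fixes u v A c B :: real
  assumes A0: "0 < A" and u0: "0 \<le> u" and v0: "0 \<le> v" and c0: "0 \<le> c"
    and uB: "u * B \<le> 2 * A" and vu: "v \<le> u - c * u\<^sup>2 / (2 * A)"
  shows "v * (B + c) \<le> 2 * A"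
proof (cases "u = 0")
  case True
  then have "v = 0" using vu v0 by simp
  then show ?thesis using A0 by simp
next
  case False
  then have up: "0 < u" using u0 by simp
  have "2 * A * v \<le> 2 * A * u - c * u\<^sup>2" using vu A0
    by (simp add: field_simps)
  then have "2 * A * v * (2 * A + c * u) \<le> (2 * A * u - c * u\<^sup>2) * (2 * A + c * u)"
    using A0 c0 u0 by (intro mult_right_mono) auto
  also have "\<dots> = 4 * A\<^sup>2 * u - c\<^sup>2 * u ^ 3" by (simp add: algebra_simps power2_eq_square power3_eq_cube)
  also have "\<dots> \<le> 4 * A\<^sup>2 * u" using c0 u0 by simp
  finally have "2 * A * (v * (2 * A + c * u)) \<le> 2 * A * (2 * A * u)"
    by (simp add: algebra_simps power2_eq_square)
  then have k: "v * (2 * A + c * u) \<le> 2 * A * u" using A0 by simp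
  have "v * (u * B) \<le> v * (2 * A)" using v0 uB by (intro mult_left_mono) auto
  then have "u * (v * (B + c)) \<le> u * (2 * A)" using k by (simp add: algebra_simps)
  then show ?thesis using up by simp
qed

locale gen =
  fixes \<delta> W \<alpha> :: "nat \<Rightarrow> real" and \<gamma> \<eta> A :: real
  assumes dpos: "\<And>k. 0 \<le> \<delta> k" and apos: "\<And>k. 0 < \<alpha> k" and g0: "0 < \<gamma>"
    and e0: "0 \<le> \<eta>" and e1: "\<eta> < 1"
    and step: "\<And>k l. 0 \<le> l \<Longrightarrow> l \<le> 1 \<Longrightarrow>
        \<delta> (Suc k) \<le> \<delta> k + \<gamma> * \<alpha> k * (1 - \<eta>) * (l * (- \<delta> k) + l\<^sup>2 / 2 * W k)"
    and WA: "\<And>k. W k \<le> A" and A0: "0 < A"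
begin

lemma c0: "0 < \<gamma> * \<alpha> k * (1 - \<eta>)" using g0 apos e1 by simp

lemma mono1: "\<delta> (Suc k) \<le> \<delta> k" using step[of 0 k] by simp

lemma mono: "k \<le> j \<Longrightarrow> \<delta> j \<le> \<delta> k"
  by (induction j rule: dec_induct) (auto intro: order_trans[OF mono1])

lemma part1: "W k \<le> \<delta> k \<Longrightarrow> \<delta> (Suc k) \<le> (1 - (1 - \<eta>) * \<gamma> * \<alpha> k / 2) * \<delta> k"
proof -
  assume w: "W k \<le> \<delta> k"
  have "\<delta> (Suc k) \<le> \<delta> k + \<gamma> * \<alpha> k * (1 - \<eta>) * (1 * (- \<delta> k) + 1\<^sup>2 / 2 * W k)"
    using step[of 1 k] by simp
  also have "\<dots> \<le> \<delta> k + \<gamma> * \<alpha> k * (1 - \<eta>) * (1 * (- \<delta> k) + 1\<^sup>2 / 2 * \<delta> k)"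
    using w c0[of k] by (intro add_left_mono mult_left_mono) auto
  also have "\<dots> = (1 - (1 - \<eta>) * \<gamma> * \<alpha> k / 2) * \<delta> k" by (simp add: field_simps)
  finally show ?thesis .
qed

lemma small_step: "\<delta> k < A \<Longrightarrow> \<delta> (Suc k) \<le> \<delta> k - (\<gamma> * \<alpha> k * (1 - \<eta>)) * (\<delta> k)\<^sup>2 / (2 * A)"
proof -
  assume s: "\<delta> k < A"
  define l where "l = \<delta> k / A"
  have l0: "0 \<le> l" and l1: "l \<le> 1" unfolding l_def using dpos[of k] A0 s by auto
  have "\<delta> (Suc k) \<le> \<delta> k + \<gamma> * \<alpha> k * (1 - \<eta>) * (l * (- \<delta> k) + l\<^sup>2 / 2 * W k)"
    using step[OF l0 l1] .
  also have "\<dots> \<le> \<delta> k + \<gamma> * \<alpha> k * (1 - \<eta>) * (l * (- \<delta> k) + l\<^sup>2 / 2 * A)"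
    using WA[of k] c0[of k] by (intro add_left_mono mult_left_mono) auto
  also have "l * (- \<delta> k) + l\<^sup>2 / 2 * A = - (\<delta> k)\<^sup>2 / (2 * A)"
    unfolding l_def using A0 by (simp add: field_simps power2_eq_square)
  finally show ?thesis by (simp add: algebra_simps)
qed

lemma rate_aux:
  assumes k0: "\<delta> k0 < A" and kk: "k0 \<le> k"
  shows "\<delta> k * (\<gamma> * (1 - \<eta>) * (\<Sum>t = k0..<k. \<alpha> t) + 2) \<le> 2 * A"
  using kk
proof (induction k rule: dec_induct)
  case base
  then show ?case using k0 by simp
next
  case (step k)
  have sk: "\<delta> k < A" using mono[OF step(1)] k0 by simp
  have "\<delta> (Suc k) * (\<gamma> * (1 - \<eta>) * (\<Sum>t = k0..<k. \<alpha> t) + 2 + \<gamma> * \<alpha> k * (1 - \<eta>)) \<le> 2 * A"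
    by (rule rec_step[OF A0 dpos[of k] dpos[of "Suc k"] less_imp_le[OF c0[of k]] step(3) small_step[OF sk]])
  then show ?case using step(1) by (simp add: algebra_simps)
qed

lemma rate:
  assumes k0: "\<delta> k0 < A" and kk: "k0 \<le> k"
  shows "\<delta> k \<le> 2 * A / (\<gamma> * (1 - \<eta>) * (\<Sum>t = k0..<k. \<alpha> t) + 2)"
proof -
  have "0 \<le> (\<Sum>t = k0..<k. \<alpha> t)" using apos by (simp add: sum_nonneg less_imp_le)
  then have "0 \<le> \<gamma> * (1 - \<eta>) * (\<Sum>t = k0..<k. \<alpha> t)" using g0 e1 by simp
  then have "0 < \<gamma> * (1 - \<eta>) * (\<Sum>t = k0..<k. \<alpha> t) + 2" by linarith
  then show ?thesis using rate_aux[OF k0 kk] by (simp add: field_simps)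
qed

lemma k0_bound:
  assumes k0: "\<delta> k0 < A" and before: "\<forall>k<k0. \<not> \<delta> k < A" and ab: "0 < ab" and abl: "\<forall>k. ab \<le> \<alpha> k"
  shows "real k0 \<le> max 0 (1 + 2 / (\<gamma> * (1 - \<eta>) * ab) * ln (\<delta> 0 / A))"
proof (cases k0)
  case 0 then show ?thesis by simp
next
  case (Suc m)
  define c where "c = \<gamma> * (1 - \<eta>) * ab"
  have cp: "0 < c" unfolding c_def using g0 e1 ab by simp
  have ind: "\<delta> k \<le> exp (- c * k / 2) * \<delta> 0" if "k \<le> k0" for k
    using that
  proof (induction k)
    case 0 then show ?case by simp
  next
    case (Suc k)
    have kl: "k < k0" using Suc by simp
    have "W k \<le> \<delta> k" using before kl WA[of k] by (meson not_less order_trans)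
    then have "\<delta> (Suc k) \<le> (1 - (1 - \<eta>) * \<gamma> * \<alpha> k / 2) * \<delta> k" by (rule part1)
    also have "\<dots> \<le> exp (- ((1 - \<eta>) * \<gamma> * \<alpha> k / 2)) * \<delta> k"
      using exp_ge_add_one_self[of "- ((1 - \<eta>) * \<gamma> * \<alpha> k / 2)"] dpos[of k]
      by (intro mult_right_mono) auto
    also have "\<dots> \<le> exp (- c / 2) * \<delta> k"
      unfolding c_def using abl[rule_format, of k] dpos[of k] g0 e1
      by (intro mult_right_mono) (auto simp: mult_left_mono)
    also have "\<dots> \<le> exp (- c / 2) * (exp (- c * k / 2) * \<delta> 0)"
      using Suc kl by (intro mult_left_mono) auto
    also have "\<dots> = exp (- c * Suc k / 2) * \<delta> 0"
    proof -
      have "- c / 2 + - c * k / 2 = - c * Suc k / 2" by (simp add: field_simps)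
      then have "exp (- c * Suc k / 2) = exp (- c / 2) * exp (- c * k / 2)"
        by (subst (asm) eq_commute) (simp add: exp_add[symmetric])
      then show ?thesis by (simp add: mult.assoc)
    qed
    finally show ?case .
  qed
  have "A \<le> \<delta> m" using before Suc by auto
  also have "\<dots> \<le> exp (- c * m / 2) * \<delta> 0" using ind Suc by simp
  finally have Ale: "A \<le> exp (- c * m / 2) * \<delta> 0" .
  have "\<delta> 0 \<noteq> 0"
  proof
    assume "\<delta> 0 = 0" with Ale A0 show False by simp
  qed
  then have d0: "0 < \<delta> 0" using dpos[of 0] by linarith
  have "ln A \<le> ln (exp (- c * m / 2) * \<delta> 0)" using Ale A0 by simp
  also have "\<dots> = - c * m / 2 + ln (\<delta> 0)" using d0 by (simp add: ln_mult)
  finally have "c * m / 2 \<le> ln (\<delta> 0) - ln A" by simp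
  then have "c * m / 2 \<le> ln (\<delta> 0 / A)" using d0 A0 by (simp add: ln_div)
  then have "real m \<le> 2 / c * ln (\<delta> 0 / A)" using cp by (simp add: field_simps)
  then show ?thesis using Suc unfolding c_def by simp
qed

end


lemma bridge:
  assumes A1: "assumption1 f g L psi D" and fconv: "convex_on UNIV f"
    and ne: "Omega f psi D \<noteq> {}"
    and xD: "\<forall>k. x k \<in> D"
    and lr: "level_radius f psi D (x 0) R0" and R0: "R0 > 0" and M0: "M > 0"
    and Hb: "\<forall>k v. v \<bullet> (H k *v v) \<le> M * (v \<bullet> v)"
    and stp: "\<forall>k. \<exists>\<Delta>. Fv f psi (x (Suc k)) \<le> Fv f psi (x k) + \<gamma> * \<alpha> k * \<Delta>
           \<and> (\<forall>e r. Qm g psi D (x k) (H k) e \<le> ereal r \<longrightarrow> \<Delta> \<le> (1 - \<eta>) * r)"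
    and apos: "\<forall>k. 0 < \<alpha> k" and g0: "0 < \<gamma>" and e0: "0 \<le> \<eta>" and e1: "\<eta> < 1"
  shows "gen (\<lambda>k. Fv f psi (x k) - Fstar f psi D)
             (\<lambda>k. (x k - PO f psi D (x k)) \<bullet> (H k *v (x k - PO f psi D (x k)))) \<alpha> \<gamma> \<eta> (M * R0\<^sup>2)"
proof -
  define F where "F k = Fv f psi (x k)" for k
  define Fs where "Fs = Fstar f psi D"
  define P where "P k = PO f psi D (x k)" for k
  define W where "W k = (x k - P k) \<bullet> (H k *v (x k - P k))" for k
  have PD: "P k \<in> D" and PF: "Fv f psi (P k) = Fs" for k
    unfolding P_def Fs_def using PO_in[OF A1 ne] by auto
  have step: "F (Suc k) \<le> F k + \<gamma> * \<alpha> k * (1 - \<eta>) * (l * (- (F k - Fs)) + l\<^sup>2 / 2 * W k)"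
    if l0: "0 \<le> l" and l1: "l \<le> 1" for k l
  proof -
    obtain \<Delta> where st: "F (Suc k) \<le> F k + \<gamma> * \<alpha> k * \<Delta>"
      and lw: "\<forall>e r. Qm g psi D (x k) (H k) e \<le> ereal r \<longrightarrow> \<Delta> \<le> (1 - \<eta>) * r"
      using stp unfolding F_def by blast
    have qb: "Qm g psi D (x k) (H k) (l *\<^sub>R (P k - x k))
          \<le> ereal (l * (Fv f psi (P k) - Fv f psi (x k)) + l\<^sup>2 / 2 * ((P k - x k) \<bullet> (H k *v (P k - x k))))"
      by (rule Qm_bound[OF A1 fconv xD[rule_format] PD l0 l1])
    have We: "(P k - x k) \<bullet> (H k *v (P k - x k)) = W k"
      unfolding W_def using quad_neg[of "P k - x k" "H k"] by simp
    have eqB: "l * (Fv f psi (P k) - Fv f psi (x k)) + l\<^sup>2 / 2 * ((P k - x k) \<bullet> (H k *v (P k - x k)))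
        = l * (- (F k - Fs)) + l\<^sup>2 / 2 * W k"
      unfolding We PF F_def by simp
    have qb': "Qm g psi D (x k) (H k) (l *\<^sub>R (P k - x k))
          \<le> ereal (l * (- (F k - Fs)) + l\<^sup>2 / 2 * W k)" using qb unfolding eqB .
    have "\<Delta> \<le> (1 - \<eta>) * (l * (- (F k - Fs)) + l\<^sup>2 / 2 * W k)"
      using lw qb' by blast
    then have "\<gamma> * \<alpha> k * \<Delta> \<le> \<gamma> * \<alpha> k * ((1 - \<eta>) * (l * (- (F k - Fs)) + l\<^sup>2 / 2 * W k))"
      using g0 apos by (intro mult_left_mono) (auto simp: less_imp_le)
    then show ?thesis using st by (simp add: algebra_simps)
  qed
  have mono: "F k \<le> F 0" for k
  proof (induction k)
    case (Suc k)
    have "F (Suc k) \<le> F k" using step[of 0 k] by simp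
    then show ?case using Suc by simp
  qed simp
  define S where "S = {norm (y - PO f psi D y) | y. y \<in> D \<and> Fv f psi y \<le> Fv f psi (x 0)}"
  have bS: "bdd_above S" and sS: "Sup S = R0" using lr unfolding level_radius_def S_def Let_def by auto
  have nR: "norm (x k - P k) \<le> R0" for k
  proof -
    have "norm (x k - P k) \<in> S" unfolding S_def P_def using xD mono[of k] unfolding F_def by blast
    then show ?thesis using cSup_upper[OF _ bS] sS by blast
  qed
  have WA: "W k \<le> M * R0\<^sup>2" for k
  proof -
    have "W k \<le> M * ((x k - P k) \<bullet> (x k - P k))" unfolding W_def using Hb by blast
    also have "(x k - P k) \<bullet> (x k - P k) = (norm (x k - P k))\<^sup>2" by (simp add: power2_norm_eq_inner)
    also have "(norm (x k - P k))\<^sup>2 \<le> R0\<^sup>2" using nR[of k] by (intro power_mono) auto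
    finally show ?thesis using M0 by (simp add: mult_left_mono)
  qed
  show ?thesis
  proof
    show "0 \<le> Fv f psi (x k) - Fstar f psi D" for k using Fstar_le[OF A1 xD[rule_format]] by simp
    show "0 < \<alpha> k" for k using apos by blast
    show "0 < \<gamma>" "0 \<le> \<eta>" "\<eta> < 1" by fact+
    show "0 < M * R0\<^sup>2" using M0 R0 by simp
    show "(x k - PO f psi D (x k)) \<bullet> (H k *v (x k - PO f psi D (x k))) \<le> M * R0\<^sup>2" for k
      using WA unfolding W_def P_def by blast
    show "Fv f psi (x (Suc k)) - Fstar f psi D
        \<le> Fv f psi (x k) - Fstar f psi D + \<gamma> * \<alpha> k * (1 - \<eta>) *
           (l * - (Fv f psi (x k) - Fstar f psi D) + l\<^sup>2 / 2 * ((x k - PO f psi D (x k)) \<bullet> (H k *v (x k - PO f psi D (x k)))))"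
      if "0 \<le> l" "l \<le> 1" for k l
      using step[OF that, of k] unfolding F_def Fs_def W_def P_def by simp
  qed
qed

lemma alg2_Hbound:
  assumes A1: "assumption1 f g L psi D"
    and run: "alg2_run variant f g psi D \<beta> \<gamma> \<eta> m0 M0 x H0 dt J H d" and xk: "x k \<in> D"
    and M0p: "M0 > 0" and v1: "variant = 1 \<longrightarrow> m0 > 0"
    and lb: "\<forall>k. loewner_between m0 (H0 k) M0"
  shows "v \<bullet> (H k *v v) \<le> (if variant = 1 then Mt1 L \<beta> \<gamma> m0 M0 \<eta> else Mt2 L \<beta> \<gamma> m0 M0 \<eta>) * (v \<bullet> v)"
proof -
  have var: "variant = 1 \<or> variant = 2" and b0: "0 < \<beta>" and b1: "\<beta> < 1" and g0: "0 < \<gamma>"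
    and g1: "\<gamma> \<le> 1" and e0: "0 \<le> \<eta>" and e1: "\<eta> < 1"
    using run unfolding alg2_run_def by auto
  have inx: "\<And>j. j \<le> J k \<Longrightarrow> inexact \<eta> g psi D (x k) (trial_H variant \<beta> (H0 k) j) (dt k j)"
    and nacc: "\<And>j. j < J k \<Longrightarrow> \<not> alg2_accept f g psi D \<gamma> (x k) (trial_H variant \<beta> (H0 k) j) (dt k j)"
    and Hk: "H k = trial_H variant \<beta> (H0 k) (J k)"
    using run unfolding alg2_run_def by auto
  define T where "T = L * (1 + sqrt \<eta>) / (2 - \<gamma> * (1 - sqrt \<eta>))"
  have L0: "0 < L" using A1 unfolding assumption1_def by simp
  have r1: "sqrt \<eta> < 1" using e1 e0 by simp
  have "\<gamma> * (1 - sqrt \<eta>) \<le> 1 * 1" using g0 g1 r1 e0 by (intro mult_mono) auto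
  then have den: "0 < 2 - \<gamma> * (1 - sqrt \<eta>)" by simp
  have "0 \<le> sqrt \<eta>" using e0 by simp
  then have "0 < L * (1 + sqrt \<eta>)" using L0 by (intro mult_pos_pos) linarith+
  then have T0: "0 < T" unfolding T_def using den by (intro divide_pos_pos) auto
  have low_acc: "\<not> T \<le> \<mu>" if jl: "j < J k" and lw: "\<forall>v. \<mu> * (v \<bullet> v) \<le> v \<bullet> (trial_H variant \<beta> (H0 k) j *v v)" for j \<mu>
  proof
    assume "T \<le> \<mu>"
    then have "alg2_accept f g psi D \<gamma> (x k) (trial_H variant \<beta> (H0 k) j) (dt k j)"
      using accept_lemma[OF A1 xk e0 e1 g0 g1 lw _ inx] jl unfolding T_def by simp
    then show False using nacc[OF jl] by blast
  qed
  have vv: "0 \<le> v \<bullet> v" by simp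
  have lb0: "m0 * (w \<bullet> w) \<le> w \<bullet> (H0 k *v w)" "w \<bullet> (H0 k *v w) \<le> M0 * (w \<bullet> w)" for w
    using lb unfolding loewner_between_def by auto
  show ?thesis
  proof (cases "variant = 1")
    case True
    then have m0: "0 < m0" using v1 by simp
    have tq: "w \<bullet> (trial_H variant \<beta> (H0 k) j *v w) = (1 / \<beta> ^ j) * (w \<bullet> (H0 k *v w))" for j w
      unfolding trial_H_def using True by (simp add: smat)
    define Q1 where "Q1 = L * (1 + sqrt \<eta>) / (\<beta> * (2 - \<gamma> * (1 - sqrt \<eta>)) * m0)"
    have Mt: "Mt1 L \<beta> \<gamma> m0 M0 \<eta> = M0 * max 1 Q1" unfolding Mt1_def Q1_def ..
    show ?thesis
    proof (cases "J k")
      case 0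
      have "v \<bullet> (H k *v v) \<le> M0 * (v \<bullet> v)" unfolding Hk 0 tq using lb0 by simp
      also have "\<dots> \<le> M0 * max 1 Q1 * (v \<bullet> v)" using M0p vv
        by (intro mult_right_mono) (auto simp: mult_left_mono[of 1 "max 1 Q1" M0, simplified])
      finally show ?thesis using True Mt by simp
    next
      case (Suc j)
      have "\<not> T \<le> m0 / \<beta> ^ j"
      proof (rule low_acc[of j])
        show "j < J k" using Suc by simp
        have "m0 / \<beta> ^ j * (w \<bullet> w) \<le> w \<bullet> (trial_H variant \<beta> (H0 k) j *v w)" for w
        proof -
          have "m0 / \<beta> ^ j * (w \<bullet> w) = (1 / \<beta> ^ j) * (m0 * (w \<bullet> w))" by simp
          also have "\<dots> \<le> (1 / \<beta> ^ j) * (w \<bullet> (H0 k *v w))" using lb0 b0 by (intro mult_left_mono) auto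
          finally show ?thesis unfolding tq .
        qed
        then show "\<forall>w. m0 / \<beta> ^ j * (w \<bullet> w) \<le> w \<bullet> (trial_H variant \<beta> (H0 k) j *v w)" by blast
      qed
      then have lt: "m0 / \<beta> ^ j < T" by simp
      have c: "1 / \<beta> ^ Suc j \<le> Q1"
      proof -
        have "1 / \<beta> ^ j < T / m0" using lt m0 b0 by (simp add: field_simps)
        then have a: "1 / \<beta> ^ j \<le> T / m0" by simp
        have b: "1 / \<beta> ^ j / \<beta> \<le> T / m0 / \<beta>" by (rule divide_right_mono[OF a]) (use b0 in simp)
        have e1': "1 / \<beta> ^ Suc j = 1 / \<beta> ^ j / \<beta>" by simp
        have e2: "T / m0 / \<beta> = Q1" unfolding T_def Q1_def by (simp add: field_simps)
        show ?thesis unfolding e1' e2[symmetric] by (rule b)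
      qed
      have "v \<bullet> (H k *v v) = (1 / \<beta> ^ Suc j) * (v \<bullet> (H0 k *v v))" unfolding Hk Suc tq ..
      also have "\<dots> \<le> (1 / \<beta> ^ Suc j) * (M0 * (v \<bullet> v))" using lb0 b0 by (intro mult_left_mono) auto
      also have "\<dots> \<le> Q1 * (M0 * (v \<bullet> v))" using c M0p vv by (intro mult_right_mono) auto
      also have "\<dots> \<le> max 1 Q1 * (M0 * (v \<bullet> v))" using M0p vv by (intro mult_right_mono) auto
      finally show ?thesis using True Mt by (simp add: algebra_simps)
    qed
  next
    case False
    then have v2: "variant = 2" using var by simp
    have tq: "w \<bullet> (trial_H variant \<beta> (H0 k) (Suc j) *v w) = w \<bullet> (H0 k *v w) + (1 / \<beta> ^ j) * (w \<bullet> w)" for j w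
      unfolding trial_H_def using v2 by (simp add: smat matrix_vector_mult_add_rdistrib inner_add_right)
    have tq0: "trial_H variant \<beta> (H0 k) 0 = H0 k" unfolding trial_H_def using v2 by simp
    define Q2 where "Q2 = (1 / \<beta>) * (L * (1 + sqrt \<eta>) / (2 - \<gamma> * (1 - sqrt \<eta>)) - m0)"
    have Mt: "Mt2 L \<beta> \<gamma> m0 M0 \<eta> = M0 + max 1 Q2" unfolding Mt2_def Q2_def ..
    have "v \<bullet> (H k *v v) \<le> (M0 + max 1 Q2) * (v \<bullet> v)"
    proof (cases "J k")
      case 0
      have "v \<bullet> (H k *v v) \<le> M0 * (v \<bullet> v)" unfolding Hk 0 tq0 using lb0 by simp
      also have "\<dots> \<le> (M0 + max 1 Q2) * (v \<bullet> v)" using vv by (intro mult_right_mono) auto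
      finally show ?thesis .
    next
      case (Suc j)
      note Sj = Suc
      show ?thesis
      proof (cases j)
        case 0
        have "v \<bullet> (H k *v v) = v \<bullet> (H0 k *v v) + 1 * (v \<bullet> v)" unfolding Hk Sj 0 tq by simp
        also have "\<dots> \<le> (M0 + 1) * (v \<bullet> v)" using lb0 by (simp add: algebra_simps)
        also have "\<dots> \<le> (M0 + max 1 Q2) * (v \<bullet> v)" using vv by (intro mult_right_mono) auto
        finally show ?thesis .
      next
        case (Suc i)
        have "\<not> T \<le> m0 + 1 / \<beta> ^ i"
        proof (rule low_acc[of "Suc i"])
          show "Suc i < J k" using Sj Suc by simp
          show "\<forall>w. (m0 + 1 / \<beta> ^ i) * (w \<bullet> w) \<le> w \<bullet> (trial_H variant \<beta> (H0 k) (Suc i) *v w)"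
            unfolding tq using lb0 by (simp add: algebra_simps)
        qed
        then have lt: "1 / \<beta> ^ i < T - m0" by simp
        have c: "1 / \<beta> ^ Suc i \<le> Q2"
        proof -
          have b: "1 / \<beta> ^ i / \<beta> \<le> (T - m0) / \<beta>"
            by (rule divide_right_mono[OF less_imp_le[OF lt]]) (use b0 in simp)
          have e1': "1 / \<beta> ^ Suc i = 1 / \<beta> ^ i / \<beta>" by simp
          have e2: "(T - m0) / \<beta> = Q2" unfolding T_def Q2_def by simp
          show ?thesis unfolding e1' e2[symmetric] by (rule b)
        qed
        have "v \<bullet> (H k *v v) = v \<bullet> (H0 k *v v) + (1 / \<beta> ^ Suc i) * (v \<bullet> v)"
          unfolding Hk Sj Suc tq ..
        also have "\<dots> \<le> M0 * (v \<bullet> v) + Q2 * (v \<bullet> v)" using lb0 c vv by (intro add_mono mult_right_mono) auto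
        also have "\<dots> \<le> M0 * (v \<bullet> v) + max 1 Q2 * (v \<bullet> v)" using vv
          by (intro add_left_mono mult_right_mono) auto
        also have "\<dots> = (M0 + max 1 Q2) * (v \<bullet> v)" by (simp add: algebra_simps)
        finally show ?thesis .
      qed
    qed
    then show ?thesis using False Mt by simp
  qed
qed


lemma mnorm_quad:
  assumes "mnorm H \<le> M"
  shows "v \<bullet> (H *v v) \<le> M * (v \<bullet> (v::real^'n))"
proof -
  have "v \<bullet> (H *v v) \<le> norm v * norm (H *v v)" by (rule norm_cauchy_schwarz)
  also have "norm (H *v v) \<le> mnorm H * norm v"
    unfolding mnorm_def using onorm[OF matrix_vector_mul_bounded_linear, of H v] by simp
  then have "norm v * norm (H *v v) \<le> norm v * (mnorm H * norm v)" by (intro mult_left_mono) auto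
  also have "\<dots> = mnorm H * (v \<bullet> v)" by (simp add: power2_norm_eq_inner[symmetric] power2_eq_square)
  also have "\<dots> \<le> M * (v \<bullet> v)" using assms by (intro mult_right_mono) auto
  finally show ?thesis .
qed

theorem theorem1:
  fixes f psi :: "real^'n \<Rightarrow> real" and g :: "real^'n \<Rightarrow> real^'n"
    and D :: "(real^'n) set" and L :: real
  assumes A1: "assumption1 f g L psi D"
    and fconv: "convex_on UNIV f"
    and Omega_ne: "Omega f psi D \<noteq> {}"
  shows
  "(\<forall>\<beta> \<gamma> \<eta> x H d \<alpha> R0 M.
      alg1_run f g psi D \<beta> \<gamma> \<eta> x H d \<alpha> \<and>
      level_radius f psi D (x 0) R0 \<and> R0 > 0 \<and> M > 0 \<and> (\<forall>k. mnorm (H k) \<le> M) \<and>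
      (\<forall>k. psd (H k))
      \<longrightarrow>
      (\<forall>k. (x k - PO f psi D (x k)) \<bullet> (H k *v (x k - PO f psi D (x k)))
              \<le> Fv f psi (x k) - Fstar f psi D
           \<longrightarrow> Fv f psi (x (Suc k)) - Fstar f psi D
                 \<le> (1 - (1 - \<eta>) * \<gamma> * \<alpha> k / 2) * (Fv f psi (x k) - Fstar f psi D)) \<and>
      (\<forall>k0. is_k0 f psi D x M R0 k0 \<longrightarrow>
         (\<forall>k \<ge> k0. Fv f psi (x k) - Fstar f psi D
                     \<le> 2 * M * R0\<^sup>2 / (\<gamma> * (1 - \<eta>) * (\<Sum>t = k0..<k. \<alpha> t) + 2)) \<and>
         (\<forall>\<alpha>b > 0. (\<forall>k. \<alpha>b \<le> \<alpha> k) \<longrightarrow>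
            real k0 \<le> max 0 (1 + 2 / (\<gamma> * (1 - \<eta>) * \<alpha>b)
                                  * ln ((Fv f psi (x 0) - Fstar f psi D) / (M * R0\<^sup>2))))))
   \<and>
   (\<forall>variant \<in> {1, 2}. \<forall>\<beta> \<gamma> \<eta> m0 M0 x H0 dt J H d R0.
      alg2_run variant f g psi D \<beta> \<gamma> \<eta> m0 M0 x H0 dt J H d \<and>
      level_radius f psi D (x 0) R0 \<and> R0 > 0 \<and>
      M0 > 0 \<and> m0 \<le> M0 \<and> (variant = 1 \<longrightarrow> m0 > 0) \<and>
      (\<forall>k. loewner_between m0 (H0 k) M0) \<and> (\<forall>k. psd (H k))
      \<longrightarrow>
      (let Mt = (if variant = 1 then Mt1 L \<beta> \<gamma> m0 M0 \<eta> else Mt2 L \<beta> \<gamma> m0 M0 \<eta>) in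
      (\<forall>k. (x k - PO f psi D (x k)) \<bullet> (H k *v (x k - PO f psi D (x k)))
              \<le> Fv f psi (x k) - Fstar f psi D
           \<longrightarrow> Fv f psi (x (Suc k)) - Fstar f psi D
                 \<le> (1 - (1 - \<eta>) * \<gamma> / 2) * (Fv f psi (x k) - Fstar f psi D)) \<and>
      (\<forall>k0. is_k0 f psi D x Mt R0 k0 \<longrightarrow>
         (\<forall>k \<ge> k0. Fv f psi (x k) - Fstar f psi D
                     \<le> 2 * Mt * R0\<^sup>2 / (\<gamma> * (1 - \<eta>) * real (k - k0) + 2)) \<and>
         real k0 \<le> max 0 (1 + 2 / (\<gamma> * (1 - \<eta>))
                               * ln ((Fv f psi (x 0) - Fstar f psi D) / (Mt * R0\<^sup>2))))))"
proof (intro conjI)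
  show "\<forall>\<beta> \<gamma> \<eta> x H d \<alpha> R0 M.
      alg1_run f g psi D \<beta> \<gamma> \<eta> x H d \<alpha> \<and>
      level_radius f psi D (x 0) R0 \<and> R0 > 0 \<and> M > 0 \<and> (\<forall>k. mnorm (H k) \<le> M) \<and>
      (\<forall>k. psd (H k))
      \<longrightarrow>
      (\<forall>k. (x k - PO f psi D (x k)) \<bullet> (H k *v (x k - PO f psi D (x k)))
              \<le> Fv f psi (x k) - Fstar f psi D
           \<longrightarrow> Fv f psi (x (Suc k)) - Fstar f psi D
                 \<le> (1 - (1 - \<eta>) * \<gamma> * \<alpha> k / 2) * (Fv f psi (x k) - Fstar f psi D)) \<and>
      (\<forall>k0. is_k0 f psi D x M R0 k0 \<longrightarrow>
         (\<forall>k \<ge> k0. Fv f psi (x k) - Fstar f psi D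
                     \<le> 2 * M * R0\<^sup>2 / (\<gamma> * (1 - \<eta>) * (\<Sum>t = k0..<k. \<alpha> t) + 2)) \<and>
         (\<forall>\<alpha>b > 0. (\<forall>k. \<alpha>b \<le> \<alpha> k) \<longrightarrow>
            real k0 \<le> max 0 (1 + 2 / (\<gamma> * (1 - \<eta>) * \<alpha>b)
                                  * ln ((Fv f psi (x 0) - Fstar f psi D) / (M * R0\<^sup>2)))))"
  proof (intro allI impI, elim conjE)
    fix \<beta> \<gamma> \<eta> x H d \<alpha> R0 M
    assume run: "alg1_run f g psi D \<beta> \<gamma> \<eta> x H d \<alpha>" and lr: "level_radius f psi D (x 0) R0"
      and R0: "R0 > 0" and M0: "M > 0" and Hn: "\<forall>k. mnorm (H k) \<le> M" and psdH: "\<forall>k. psd (H k)"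
    have g0: "0 < \<gamma>" and e0: "0 \<le> \<eta>" and e1: "\<eta> < 1" and x0: "x 0 \<in> D"
      using run unfolding alg1_run_def by auto
    have xD: "x k \<in> D" for k
    proof (induction k)
      case 0 show ?case by (rule x0)
    next
      case (Suc k) then show ?case using alg1_step[OF A1 run psdH[rule_format] Suc] by blast
    qed
    have st: "\<forall>k. \<exists>\<Delta>. Fv f psi (x (Suc k)) \<le> Fv f psi (x k) + \<gamma> * \<alpha> k * \<Delta>
           \<and> (\<forall>e r. Qm g psi D (x k) (H k) e \<le> ereal r \<longrightarrow> \<Delta> \<le> (1 - \<eta>) * r)"
      using alg1_step[OF A1 run psdH[rule_format] xD] by blast
    have apos: "\<forall>k. 0 < \<alpha> k" using alg1_step[OF A1 run psdH[rule_format] xD] by blast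
    have Hb: "\<forall>k v. v \<bullet> (H k *v v) \<le> M * (v \<bullet> v)" using Hn mnorm_quad by blast
    interpret G: gen "\<lambda>k. Fv f psi (x k) - Fstar f psi D"
             "\<lambda>k. (x k - PO f psi D (x k)) \<bullet> (H k *v (x k - PO f psi D (x k)))" \<alpha> \<gamma> \<eta> "M * R0\<^sup>2"
      by (rule bridge[OF A1 fconv Omega_ne allI[OF xD] lr R0 M0 Hb st apos g0 e0 e1])
    show "(\<forall>k. (x k - PO f psi D (x k)) \<bullet> (H k *v (x k - PO f psi D (x k)))
              \<le> Fv f psi (x k) - Fstar f psi D
           \<longrightarrow> Fv f psi (x (Suc k)) - Fstar f psi D
                 \<le> (1 - (1 - \<eta>) * \<gamma> * \<alpha> k / 2) * (Fv f psi (x k) - Fstar f psi D)) \<and>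
      (\<forall>k0. is_k0 f psi D x M R0 k0 \<longrightarrow>
         (\<forall>k \<ge> k0. Fv f psi (x k) - Fstar f psi D
                     \<le> 2 * M * R0\<^sup>2 / (\<gamma> * (1 - \<eta>) * (\<Sum>t = k0..<k. \<alpha> t) + 2)) \<and>
         (\<forall>\<alpha>b > 0. (\<forall>k. \<alpha>b \<le> \<alpha> k) \<longrightarrow>
            real k0 \<le> max 0 (1 + 2 / (\<gamma> * (1 - \<eta>) * \<alpha>b)
                                  * ln ((Fv f psi (x 0) - Fstar f psi D) / (M * R0\<^sup>2)))))"
    proof (intro conjI allI impI)
      fix k assume "(x k - PO f psi D (x k)) \<bullet> (H k *v (x k - PO f psi D (x k)))
              \<le> Fv f psi (x k) - Fstar f psi D"
      then show "Fv f psi (x (Suc k)) - Fstar f psi D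
                 \<le> (1 - (1 - \<eta>) * \<gamma> * \<alpha> k / 2) * (Fv f psi (x k) - Fstar f psi D)"
        using G.part1 by blast
    next
      fix k0 k assume k0: "is_k0 f psi D x M R0 k0" and kk: "k0 \<le> k"
      have "Fv f psi (x k0) - Fstar f psi D < M * R0\<^sup>2" using k0 unfolding is_k0_def by blast
      then show "Fv f psi (x k) - Fstar f psi D
                     \<le> 2 * M * R0\<^sup>2 / (\<gamma> * (1 - \<eta>) * (\<Sum>t = k0..<k. \<alpha> t) + 2)"
        using G.rate[of k0 k] kk by (simp add: mult.assoc)
    next
      fix k0 :: nat and ab :: real
      assume k0: "is_k0 f psi D x M R0 k0" and ab: "0 < ab" and abl: "\<forall>k. ab \<le> \<alpha> k"
      show "real k0 \<le> max 0 (1 + 2 / (\<gamma> * (1 - \<eta>) * ab)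
                                  * ln ((Fv f psi (x 0) - Fstar f psi D) / (M * R0\<^sup>2)))"
        using G.k0_bound[OF _ _ ab abl] k0 unfolding is_k0_def by blast
    qed
  qed
next
  show "\<forall>variant \<in> {1, 2}. \<forall>\<beta> \<gamma> \<eta> m0 M0 x H0 dt J H d R0.
      alg2_run variant f g psi D \<beta> \<gamma> \<eta> m0 M0 x H0 dt J H d \<and>
      level_radius f psi D (x 0) R0 \<and> R0 > 0 \<and>
      M0 > 0 \<and> m0 \<le> M0 \<and> (variant = 1 \<longrightarrow> m0 > 0) \<and>
      (\<forall>k. loewner_between m0 (H0 k) M0) \<and> (\<forall>k. psd (H k))
      \<longrightarrow>
      (let Mt = (if variant = 1 then Mt1 L \<beta> \<gamma> m0 M0 \<eta> else Mt2 L \<beta> \<gamma> m0 M0 \<eta>) in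
      (\<forall>k. (x k - PO f psi D (x k)) \<bullet> (H k *v (x k - PO f psi D (x k)))
              \<le> Fv f psi (x k) - Fstar f psi D
           \<longrightarrow> Fv f psi (x (Suc k)) - Fstar f psi D
                 \<le> (1 - (1 - \<eta>) * \<gamma> / 2) * (Fv f psi (x k) - Fstar f psi D)) \<and>
      (\<forall>k0. is_k0 f psi D x Mt R0 k0 \<longrightarrow>
         (\<forall>k \<ge> k0. Fv f psi (x k) - Fstar f psi D
                     \<le> 2 * Mt * R0\<^sup>2 / (\<gamma> * (1 - \<eta>) * real (k - k0) + 2)) \<and>
         real k0 \<le> max 0 (1 + 2 / (\<gamma> * (1 - \<eta>))
                               * ln ((Fv f psi (x 0) - Fstar f psi D) / (Mt * R0\<^sup>2)))))"
  proof (intro ballI allI impI, elim conjE)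
    fix variant :: nat and \<beta> \<gamma> \<eta> m0 M0 x H0 dt J H d R0
    assume run: "alg2_run variant f g psi D \<beta> \<gamma> \<eta> m0 M0 x H0 dt J H d"
      and lr: "level_radius f psi D (x 0) R0" and R0: "R0 > 0" and M0p: "M0 > 0" and mM: "m0 \<le> M0"
      and v1: "variant = 1 \<longrightarrow> m0 > 0" and lb: "\<forall>k. loewner_between m0 (H0 k) M0"
      and psdH: "\<forall>k. psd (H k)"
    define Mt where "Mt = (if variant = 1 then Mt1 L \<beta> \<gamma> m0 M0 \<eta> else Mt2 L \<beta> \<gamma> m0 M0 \<eta>)"
    have g0: "0 < \<gamma>" and e0: "0 \<le> \<eta>" and e1: "\<eta> < 1" and x0: "x 0 \<in> D"
      using run unfolding alg2_run_def by auto
    have inxk: "inexact \<eta> g psi D (x k) (H k) (d k)" and acck: "alg2_accept f g psi D \<gamma> (x k) (H k) (d k)"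
      and xs: "x (Suc k) = x k + d k" for k
      using run unfolding alg2_run_def by auto
    have st1: "x (Suc k) \<in> D \<and> (\<exists>\<Delta>. Fv f psi (x (Suc k)) \<le> Fv f psi (x k) + \<gamma> * (\<lambda>k. 1::real) k * \<Delta>
           \<and> (\<forall>e r. Qm g psi D (x k) (H k) e \<le> ereal r \<longrightarrow> \<Delta> \<le> (1 - \<eta>) * r))" if xk: "x k \<in> D" for k
    proof -
      obtain s q where Qd: "Qm g psi D (x k) (H k) (d k) = ereal q" and qs: "q \<le> (1 - \<eta>) * s"
        and dD: "x k + d k \<in> D" and low: "\<forall>e r. Qm g psi D (x k) (H k) e \<le> ereal r \<longrightarrow> s \<le> r"
        using inexact_facts[OF inxk e0 e1 xk] by blast
      have "ereal (- \<gamma> * q) \<le> ereal (Fv f psi (x k) - Fv f psi (x k + d k))"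
        using acck[of k] unfolding alg2_accept_def Qd by simp
      then have F: "Fv f psi (x (Suc k)) \<le> Fv f psi (x k) + \<gamma> * 1 * q" unfolding xs by simp
      have "\<forall>e r. Qm g psi D (x k) (H k) e \<le> ereal r \<longrightarrow> q \<le> (1 - \<eta>) * r"
      proof (intro allI impI)
        fix e r assume "Qm g psi D (x k) (H k) e \<le> ereal r"
        then have "s \<le> r" using low by blast
        then have "(1 - \<eta>) * s \<le> (1 - \<eta>) * r" using e1 by (intro mult_left_mono) auto
        then show "q \<le> (1 - \<eta>) * r" using qs by linarith
      qed
      then show ?thesis using F dD xs by auto
    qed
    have xD: "x k \<in> D" for k
    proof (induction k)
      case 0 show ?case by (rule x0)
    next
      case (Suc k) then show ?case using st1 by blast
    qed
    have st: "\<forall>k. \<exists>\<Delta>. Fv f psi (x (Suc k)) \<le> Fv f psi (x k) + \<gamma> * (\<lambda>k. 1::real) k * \<Delta>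
           \<and> (\<forall>e r. Qm g psi D (x k) (H k) e \<le> ereal r \<longrightarrow> \<Delta> \<le> (1 - \<eta>) * r)"
      using st1 xD by blast
    have Hb: "\<forall>k v. v \<bullet> (H k *v v) \<le> Mt * (v \<bullet> v)"
      unfolding Mt_def using alg2_Hbound[OF A1 run xD M0p v1 lb] by blast
    have Mtp: "0 < Mt" unfolding Mt_def Mt1_def Mt2_def using M0p
      by (auto intro!: mult_pos_pos simp: less_max_iff_disj)
    interpret G: gen "\<lambda>k. Fv f psi (x k) - Fstar f psi D"
             "\<lambda>k. (x k - PO f psi D (x k)) \<bullet> (H k *v (x k - PO f psi D (x k)))" "\<lambda>k. 1" \<gamma> \<eta> "Mt * R0\<^sup>2"
      by (rule bridge[OF A1 fconv Omega_ne allI[OF xD] lr R0 Mtp Hb st _ g0 e0 e1]) simp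
    have "(\<forall>k. (x k - PO f psi D (x k)) \<bullet> (H k *v (x k - PO f psi D (x k)))
              \<le> Fv f psi (x k) - Fstar f psi D
           \<longrightarrow> Fv f psi (x (Suc k)) - Fstar f psi D
                 \<le> (1 - (1 - \<eta>) * \<gamma> / 2) * (Fv f psi (x k) - Fstar f psi D)) \<and>
      (\<forall>k0. is_k0 f psi D x Mt R0 k0 \<longrightarrow>
         (\<forall>k \<ge> k0. Fv f psi (x k) - Fstar f psi D
                     \<le> 2 * Mt * R0\<^sup>2 / (\<gamma> * (1 - \<eta>) * real (k - k0) + 2)) \<and>
         real k0 \<le> max 0 (1 + 2 / (\<gamma> * (1 - \<eta>))
                               * ln ((Fv f psi (x 0) - Fstar f psi D) / (Mt * R0\<^sup>2))))"
    proof (intro conjI allI impI)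
      fix k assume "(x k - PO f psi D (x k)) \<bullet> (H k *v (x k - PO f psi D (x k)))
              \<le> Fv f psi (x k) - Fstar f psi D"
      then show "Fv f psi (x (Suc k)) - Fstar f psi D
                 \<le> (1 - (1 - \<eta>) * \<gamma> / 2) * (Fv f psi (x k) - Fstar f psi D)"
        using G.part1 by simp
    next
      fix k0 k assume k0: "is_k0 f psi D x Mt R0 k0" and kk: "k0 \<le> k"
      have "Fv f psi (x k0) - Fstar f psi D < Mt * R0\<^sup>2" using k0 unfolding is_k0_def by blast
      then show "Fv f psi (x k) - Fstar f psi D
                     \<le> 2 * Mt * R0\<^sup>2 / (\<gamma> * (1 - \<eta>) * real (k - k0) + 2)"
        using G.rate[of k0 k] kk by (simp add: mult.assoc)
    next
      fix k0 assume k0: "is_k0 f psi D x Mt R0 k0"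
      have "real k0 \<le> max 0 (1 + 2 / (\<gamma> * (1 - \<eta>) * 1)
                               * ln ((Fv f psi (x 0) - Fstar f psi D) / (Mt * R0\<^sup>2)))"
        using G.k0_bound[of k0 1] k0 unfolding is_k0_def by simp
      then show "real k0 \<le> max 0 (1 + 2 / (\<gamma> * (1 - \<eta>))
                               * ln ((Fv f psi (x 0) - Fstar f psi D) / (Mt * R0\<^sup>2)))" by simp
    qed
    then show "let Mt = (if variant = 1 then Mt1 L \<beta> \<gamma> m0 M0 \<eta> else Mt2 L \<beta> \<gamma> m0 M0 \<eta>) in
      (\<forall>k. (x k - PO f psi D (x k)) \<bullet> (H k *v (x k - PO f psi D (x k)))
              \<le> Fv f psi (x k) - Fstar f psi D
           \<longrightarrow> Fv f psi (x (Suc k)) - Fstar f psi D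
                 \<le> (1 - (1 - \<eta>) * \<gamma> / 2) * (Fv f psi (x k) - Fstar f psi D)) \<and>
      (\<forall>k0. is_k0 f psi D x Mt R0 k0 \<longrightarrow>
         (\<forall>k \<ge> k0. Fv f psi (x k) - Fstar f psi D
                     \<le> 2 * Mt * R0\<^sup>2 / (\<gamma> * (1 - \<eta>) * real (k - k0) + 2)) \<and>
         real k0 \<le> max 0 (1 + 2 / (\<gamma> * (1 - \<eta>))
                               * ln ((Fv f psi (x 0) - Fstar f psi D) / (Mt * R0\<^sup>2))))"
      unfolding Mt_def Let_def .
  qed
qed

end
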